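(* Let $H$ be a Hilbert space of dimension $N>1$, let $\mathcal F=\mathcal F(H)$ be the full Fock space, and let $v\in H$ with $\|v\|=1$. Then $$\mathbb{C}\Omega\oplus\sum_{w\in H\ominus\{v\}}\operatorname{Ran}(T_w)=N(T_v^* ),$$ where $H\ominus\{v\}=\{w\in H:\langle w,v\rangle=0\}$, $\operatorname{Ran}$ denotes range and $N(T_v^* )$ is the kernel of $T_v^*$.
   Context: $\mathcal F(H)=\mathbb{C}\Omega\oplus H\oplus(H\otimes H)\oplus\cdots$ (Hilbert direct sum, $\Omega$ a fixed unit vector). For $v\in H$, $T_v$ is the operator on $\mathcal F$ with $T_v\Omega=v$ and $T_v\xi=\xi\otimes v$ for $\xi\in H^{\otimes n}$, $n\ge1$. The sum on the left is the closed linear span of the indicated subspaces. *)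

theory Defs
  imports "HOL-Analysis.Analysis"
begin

text \<open>Concrete model: H = l2 over an index type 'i (an orthonormal basis of H indexed
by 'i, so dim H = cardinality of 'i). The full Fock space is l2 over words 'i list:
the word [] spans C Omega, words of length n span H tensor-power n, with
e_{i1} (x) ... (x) e_{in} corresponding to the word [i1,...,in].\<close>

definition l2_space :: "('a \<Rightarrow> complex) set" where
  "l2_space = {f. (\<lambda>x. (cmod (f x))^2) summable_on UNIV}"

definition l2_inner :: "('a \<Rightarrow> complex) \<Rightarrow> ('a \<Rightarrow> complex) \<Rightarrow> complex" where
  "l2_inner f g = (\<Sum>\<^sub>\<infinity>x. f x * cnj (g x))"

definition l2_norm :: "('a \<Rightarrow> complex) \<Rightarrow> real" where
  "l2_norm f = sqrt (\<Sum>\<^sub>\<infinity>x. (cmod (f x))^2)"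

definition fock_vac :: "'i list \<Rightarrow> complex" where
  "fock_vac xs = (if xs = [] then 1 else 0)"

text \<open>Right creation operator T_v: T_v Omega = v, T_v xi = xi (x) v.\<close>
definition creation :: "('i \<Rightarrow> complex) \<Rightarrow> ('i list \<Rightarrow> complex) \<Rightarrow> ('i list \<Rightarrow> complex)" where
  "creation v \<xi> xs = (if xs = [] then 0 else \<xi> (butlast xs) * v (last xs))"

definition l2_adjoint :: "(('a \<Rightarrow> complex) \<Rightarrow> ('a \<Rightarrow> complex)) \<Rightarrow> ('a \<Rightarrow> complex) \<Rightarrow> ('a \<Rightarrow> complex)" where
  "l2_adjoint T \<xi> = (THE \<zeta>. \<zeta> \<in> l2_space \<and> (\<forall>\<eta>\<in>l2_space. l2_inner (T \<eta>) \<xi> = l2_inner \<eta> \<zeta>))"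

definition cspan :: "('a \<Rightarrow> complex) set \<Rightarrow> ('a \<Rightarrow> complex) set" where
  "cspan S = {f. \<exists>A c. finite A \<and> A \<subseteq> S \<and> f = (\<lambda>x. \<Sum>s\<in>A. c s * s x)}"

definition l2_closure :: "('a \<Rightarrow> complex) set \<Rightarrow> ('a \<Rightarrow> complex) set" where
  "l2_closure S = {f \<in> l2_space. \<forall>e>0. \<exists>g\<in>S. l2_norm (\<lambda>x. f x - g x) < e}"

end

theory Submission
  imports Defs
begin

lemma l2_sq_nonneg: "0 \<le> (cmod (f x))^2" by simp

lemma l2_summ: "f \<in> l2_space \<Longrightarrow> (\<lambda>x. (cmod (f x))^2) summable_on UNIV"
  by (simp add: l2_space_def)

lemma l2_add: assumes "f \<in> l2_space" "g \<in> l2_space" shows "(\<lambda>x. f x + g x) \<in> l2_space"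
proof -
  have s: "(\<lambda>x. 2*(cmod (f x))^2 + 2*(cmod (g x))^2) summable_on UNIV"
    using assms by (intro summable_on_add summable_on_cmult_right) (auto simp: l2_space_def)
  have "(cmod (f x + g x))^2 \<le> 2*(cmod (f x))^2 + 2*(cmod (g x))^2" for x
  proof -
    have "cmod (f x + g x) \<le> cmod (f x) + cmod (g x)" by (rule norm_triangle_ineq)
    hence "(cmod (f x + g x))^2 \<le> (cmod (f x) + cmod (g x))^2" by (simp add: power_mono)
    also have "\<dots> \<le> 2*(cmod (f x))^2 + 2*(cmod (g x))^2"
    proof -
      have "0 \<le> (cmod (f x) - cmod (g x))^2" by simp
      then show ?thesis by (simp add: power2_sum power2_diff)
    qed
    finally show ?thesis .
  qed
  then show ?thesis unfolding l2_space_def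
    by (auto intro!: summable_on_comparison_test[OF s])
qed

lemma l2_scale: assumes "f \<in> l2_space" shows "(\<lambda>x. c * f x) \<in> l2_space"
proof -
  have "(\<lambda>x. (cmod c)^2 * (cmod (f x))^2) summable_on UNIV"
    using assms by (intro summable_on_cmult_right) (auto simp: l2_space_def)
  then show ?thesis by (simp add: l2_space_def norm_mult power_mult_distrib)
qed

lemma l2_diff: assumes "f \<in> l2_space" "g \<in> l2_space" shows "(\<lambda>x. f x - g x) \<in> l2_space"
  using l2_add[OF assms(1) l2_scale[OF assms(2), of "-1"]] by simp

lemma l2_zero: "(\<lambda>x. 0) \<in> l2_space" by (simp add: l2_space_def)

lemma l2_finite_support: assumes "finite {x. f x \<noteq> 0}" shows "f \<in> l2_space"
proof -
  have "(\<lambda>x. (cmod (f x))^2) summable_on {x. f x \<noteq> 0}" using assms by simp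
  moreover have "(\<lambda>x. (cmod (f x))^2) summable_on {x. f x \<noteq> 0} \<longleftrightarrow> (\<lambda>x. (cmod (f x))^2) summable_on UNIV"
    by (rule summable_on_cong_neutral) auto
  ultimately show ?thesis unfolding l2_space_def by simp
qed

lemma l2_prod_abs: assumes "f \<in> l2_space" "g \<in> l2_space"
  shows "(\<lambda>x. cmod (f x) * cmod (g x)) summable_on UNIV"
proof -
  have s: "(\<lambda>x. (cmod (f x))^2 + (cmod (g x))^2) summable_on UNIV"
    using assms by (intro summable_on_add) (auto simp: l2_space_def)
  have "cmod (f x) * cmod (g x) \<le> (cmod (f x))^2 + (cmod (g x))^2" for x
  proof -
    have "0 \<le> (cmod (f x) - cmod (g x))^2" by simp
    hence "0 \<le> (cmod (f x))^2 + (cmod (g x))^2 - 2 * (cmod (f x) * cmod (g x))"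
      by (simp add: power2_diff mult.assoc)
    moreover have "0 \<le> cmod (f x) * cmod (g x)" by simp
    ultimately show ?thesis by linarith
  qed
  then show ?thesis by (auto intro!: summable_on_comparison_test[OF s])
qed

lemma l2_inner_abs_summable: assumes "f \<in> l2_space" "g \<in> l2_space"
  shows "(\<lambda>x. norm (f x * cnj (g x))) summable_on UNIV"
  using l2_prod_abs[OF assms] by (simp add: norm_mult)

lemma l2_inner_summable: assumes "f \<in> l2_space" "g \<in> l2_space"
  shows "(\<lambda>x. f x * cnj (g x)) summable_on UNIV"
  by (rule abs_summable_summable[OF l2_inner_abs_summable[OF assms]])

lemma real_cs_aux:
  fixes a b c :: real
  assumes "a \<ge> 0" "b \<ge> 0" "c \<ge> 0" "\<And>s. s > 0 \<Longrightarrow> 2*c \<le> s*a + b/s"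
  shows "c^2 \<le> a*b"
proof (cases "a > 0 \<and> b > 0")
  case True
  define s where "s = sqrt b / sqrt a"
  have sa: "sqrt a > 0" "sqrt b > 0" using True by auto
  have sp: "s > 0" using sa by (simp add: s_def)
  have "s * a = sqrt a * sqrt b" using sa True
    by (simp add: s_def field_simps)
  moreover have "b / s = sqrt a * sqrt b" using sa True
    by (simp add: s_def field_simps)
  ultimately have "c \<le> sqrt a * sqrt b" using assms(4)[OF sp] by simp
  hence "c^2 \<le> (sqrt a * sqrt b)^2" using assms(3) by (rule power_mono)
  also have "\<dots> = a * b" using assms by (simp add: power_mult_distrib)
  finally show ?thesis .
next
  case False
  have "c \<le> 0"
  proof (rule ccontr)
    assume "\<not> c \<le> 0"
    hence cp: "c > 0" by simp
    show False
    proof (cases "a = 0")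
      case True
      have pos: "b/c + 1 > 0" using assms(2) cp by (intro add_nonneg_pos divide_nonneg_pos) auto
      have "2*c \<le> b/(b/c + 1)" using assms(4)[OF pos] True by simp
      also have "\<dots> < c" using cp assms(2)
        by (simp add: divide_simps)
      finally show False using cp by simp
    next
      case False
      hence b0: "b = 0" using \<open>\<not> (a > 0 \<and> b > 0)\<close> assms by auto
      have ap: "a > 0" using False assms by simp
      have "2*c \<le> (c/a)*a" using assms(4)[of "c/a"] b0 ap cp by simp
      also have "\<dots> = c" using ap by simp
      finally show False using cp by simp
    qed
  qed
  then show ?thesis using assms by simp
qed


lemma am_gm_scaled:
  fixes x y s :: real assumes "s > 0"
  shows "2*(x*y) \<le> s*x^2 + (1/s)*y^2"
proof -
  have "0 \<le> (s*x - y)^2 / s" using assms by simp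
  also have "(s*x - y)^2 / s = s*x^2 + (1/s)*y^2 - 2*(x*y)" using assms
    by (simp add: power2_diff field_simps power2_eq_square)
  finally show ?thesis by simp
qed

lemma l2_cs: assumes "f \<in> l2_space" "g \<in> l2_space"
  shows "(cmod (l2_inner f g))^2 \<le> (\<Sum>\<^sub>\<infinity>x. (cmod (f x))^2) * (\<Sum>\<^sub>\<infinity>x. (cmod (g x))^2)"
proof -
  define a where "a = (\<Sum>\<^sub>\<infinity>x. (cmod (f x))^2)"
  define b where "b = (\<Sum>\<^sub>\<infinity>x. (cmod (g x))^2)"
  define c where "c = (\<Sum>\<^sub>\<infinity>x. cmod (f x) * cmod (g x))"
  have sf: "(\<lambda>x. (cmod (f x))^2) summable_on UNIV" and sg: "(\<lambda>x. (cmod (g x))^2) summable_on UNIV"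
    using assms by (auto simp: l2_space_def)
  have sfg: "(\<lambda>x. cmod (f x) * cmod (g x)) summable_on UNIV" by (rule l2_prod_abs[OF assms])
  have a0: "a \<ge> 0" unfolding a_def by (rule infsum_nonneg) simp
  have b0: "b \<ge> 0" unfolding b_def by (rule infsum_nonneg) simp
  have c0: "c \<ge> 0" unfolding c_def by (rule infsum_nonneg) simp
  have key: "2*c \<le> s*a + b/s" if sp: "s > 0" for s
  proof -
    have "2*c = (\<Sum>\<^sub>\<infinity>x. 2*(cmod (f x) * cmod (g x)))"
      unfolding c_def by (rule infsum_cmult_right[symmetric]) (use sfg in auto)
    also have "\<dots> \<le> (\<Sum>\<^sub>\<infinity>x. s*(cmod (f x))^2 + (1/s)*(cmod (g x))^2)"
      using sp sf sg sfg
      by (intro infsum_mono am_gm_scaled summable_on_add summable_on_cmult_right ) auto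
    also have "\<dots> = s*a + b/s"
    proof -
      have "(\<Sum>\<^sub>\<infinity>x. s*(cmod (f x))^2 + (1/s)*(cmod (g x))^2) = (\<Sum>\<^sub>\<infinity>x. s*(cmod (f x))^2) + (\<Sum>\<^sub>\<infinity>x. (1/s)*(cmod (g x))^2)"
        using sf sg by (intro infsum_add summable_on_cmult_right)
      also have "(\<Sum>\<^sub>\<infinity>x. s*(cmod (f x))^2) = s*a" unfolding a_def
        using sf by (intro infsum_cmult_right) auto
      also have "(\<Sum>\<^sub>\<infinity>x. (1/s)*(cmod (g x))^2) = b/s" unfolding b_def
        using sg by (subst infsum_cmult_right) auto
      finally show ?thesis .
    qed
    finally show ?thesis .
  qed
  have "c^2 \<le> a*b" by (rule real_cs_aux[OF a0 b0 c0 key])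
  moreover have "cmod (l2_inner f g) \<le> c"
  proof -
    have "cmod (l2_inner f g) \<le> (\<Sum>\<^sub>\<infinity>x. norm (f x * cnj (g x)))"
      unfolding l2_inner_def by (rule norm_infsum_bound) (use l2_inner_abs_summable[OF assms] in simp)
    also have "\<dots> = c" unfolding c_def by (simp add: norm_mult)
    finally show ?thesis .
  qed
  ultimately show ?thesis unfolding a_def[symmetric] b_def[symmetric]
    by (meson norm_ge_zero order_trans power_mono)
qed

lemma l2_row:
  assumes "f \<in> l2_space"
  shows "(\<lambda>i. f (ys@[i])) \<in> l2_space"
    and "(\<Sum>\<^sub>\<infinity>i. (cmod (f (ys@[i])))^2) \<le> (\<Sum>\<^sub>\<infinity>x. (cmod (f x))^2)"
proof -
  define h where "h = (\<lambda>i::'a. ys@[i])"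
  have inj: "inj_on h UNIV" unfolding h_def by (auto simp: inj_on_def)
  have sf: "(\<lambda>x. (cmod (f x))^2) summable_on UNIV" using assms by (simp add: l2_space_def)
  have s1: "(\<lambda>x. (cmod (f x))^2) summable_on range h"
    by (rule summable_on_subset_banach[OF sf]) auto
  hence s2: "((\<lambda>x. (cmod (f x))^2) \<circ> h) summable_on UNIV" using summable_on_reindex[OF inj] by blast
  then show "(\<lambda>i. f (ys@[i])) \<in> l2_space" by (simp add: l2_space_def h_def o_def)
  have "(\<Sum>\<^sub>\<infinity>i. (cmod (f (ys@[i])))^2) = infsum (\<lambda>x. (cmod (f x))^2) (range h)"
    using infsum_reindex[OF inj, of "\<lambda>x. (cmod (f x))^2"] by (simp add: h_def o_def)
  also have "\<dots> \<le> (\<Sum>\<^sub>\<infinity>x. (cmod (f x))^2)"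
    by (rule infsum_mono_neutral[OF s1 sf]) auto
  finally show "(\<Sum>\<^sub>\<infinity>i. (cmod (f (ys@[i])))^2) \<le> (\<Sum>\<^sub>\<infinity>x. (cmod (f x))^2)" .
qed

definition snoc_map :: "'i list \<times> 'i \<Rightarrow> 'i list" where
  "snoc_map p = fst p @ [snd p]"

lemma snoc_map_inj: "inj_on snoc_map UNIV"
  by (auto simp: inj_on_def snoc_map_def)

lemma snoc_map_range: "range snoc_map = {xs. xs \<noteq> []}"
proof -
  have "xs \<in> range snoc_map" if "xs \<noteq> []" for xs :: "'a list"
    using that by (intro image_eqI[of _ _ "(butlast xs, last xs)"]) (auto simp: snoc_map_def)
  then show ?thesis by (auto simp: snoc_map_def)
qed

lemma lift_summable:
  fixes G :: "'i list \<Rightarrow> 'b::{comm_monoid_add,t2_space}"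
  assumes "G [] = 0"
  shows "G summable_on UNIV \<longleftrightarrow> (G \<circ> snoc_map) summable_on UNIV"
    and "infsum G UNIV = infsum (G \<circ> snoc_map) UNIV"
proof -
  have "G summable_on UNIV \<longleftrightarrow> G summable_on range snoc_map"
    using assms by (intro summable_on_cong_neutral) (auto simp: snoc_map_range)
  also have "\<dots> \<longleftrightarrow> (G \<circ> snoc_map) summable_on UNIV" by (rule summable_on_reindex[OF snoc_map_inj])
  finally show "G summable_on UNIV \<longleftrightarrow> (G \<circ> snoc_map) summable_on UNIV" .
  have "infsum G UNIV = infsum G (range snoc_map)"
    using assms by (intro infsum_cong_neutral) (auto simp: snoc_map_range)
  also have "\<dots> = infsum (G \<circ> snoc_map) UNIV" by (rule infsum_reindex[OF snoc_map_inj])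
  finally show "infsum G UNIV = infsum (G \<circ> snoc_map) UNIV" .
qed

lemma prodsq_summable:
  assumes "f \<in> l2_space" "g \<in> l2_space"
  shows "(\<lambda>p. (cmod (f (fst p)))^2 * (cmod (g (snd p)))^2) summable_on UNIV"
proof -
  have sg: "(\<lambda>i. (cmod (g i))^2) summable_on UNIV" using assms by (simp add: l2_space_def)
  have sf: "(\<lambda>i. (cmod (f i))^2) summable_on UNIV" using assms by (simp add: l2_space_def)
  have "(\<lambda>p. (cmod (f (fst p)))^2 * (cmod (g (snd p)))^2) summable_on Sigma UNIV (\<lambda>_. UNIV)"
  proof (rule summable_on_SigmaI[where g="\<lambda>x. (cmod (f x))^2 * (\<Sum>\<^sub>\<infinity>i. (cmod (g i))^2)"])
    fix x :: 'a
    show "((\<lambda>y. (cmod (f (fst (x,y))))^2 * (cmod (g (snd (x,y))))^2) has_sum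
           ((cmod (f x))^2 * (\<Sum>\<^sub>\<infinity>i. (cmod (g i))^2))) UNIV"
      using has_sum_cmult_right[OF sg[unfolded summable_iff_has_sum_infsum]] by simp
  next
    show "(\<lambda>x. (cmod (f x))^2 * (\<Sum>\<^sub>\<infinity>i. (cmod (g i))^2)) summable_on UNIV"
      using sf by (rule summable_on_cmult_left)
  next
    fix x y show "0 \<le> (cmod (f (fst (x,y))))^2 * (cmod (g (snd (x,y))))^2" by simp
  qed
  then show ?thesis by (simp add: UNIV_Times_UNIV[symmetric] del: UNIV_Times_UNIV)
qed

lemma creation_l2:
  assumes "w \<in> l2_space" "\<xi> \<in> l2_space"
  shows "creation w \<xi> \<in> l2_space"
proof -
  have "((\<lambda>xs. (cmod (creation w \<xi> xs))^2) \<circ> snoc_map) summable_on UNIV"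
    using prodsq_summable[OF assms(2) assms(1)]
    by (simp add: o_def snoc_map_def creation_def norm_mult power_mult_distrib)
  then show ?thesis unfolding l2_space_def
    using lift_summable(1)[of "\<lambda>xs. (cmod (creation w \<xi> xs))^2"] by (simp add: creation_def)
qed

definition adjT :: "('i \<Rightarrow> complex) \<Rightarrow> ('i list \<Rightarrow> complex) \<Rightarrow> 'i list \<Rightarrow> complex" where
  "adjT v \<xi> ys = l2_inner (\<lambda>i. \<xi> (ys@[i])) v"

lemma adjT_bound:
  assumes "v \<in> l2_space" "\<xi> \<in> l2_space"
  shows "(cmod (adjT v \<xi> ys))^2 \<le> (\<Sum>\<^sub>\<infinity>i. (cmod (\<xi> (ys@[i])))^2) * (\<Sum>\<^sub>\<infinity>i. (cmod (v i))^2)"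
  unfolding adjT_def by (rule l2_cs[OF l2_row(1)[OF assms(2)] assms(1)])

lemma adjT_l2:
  assumes "v \<in> l2_space" "\<xi> \<in> l2_space"
  shows "adjT v \<xi> \<in> l2_space"
proof -
  have "((\<lambda>xs. (cmod (\<xi> xs))^2) \<circ> snoc_map) summable_on UNIV"
  proof -
    have "(\<lambda>xs. (cmod (\<xi> xs))^2) summable_on UNIV" using assms(2) by (simp add: l2_space_def)
    hence "(\<lambda>xs. (cmod (\<xi> xs))^2) summable_on range snoc_map"
      by (rule summable_on_subset_banach) simp
    then show ?thesis using summable_on_reindex[OF snoc_map_inj] by blast
  qed
  hence s3: "(\<lambda>p. (cmod (\<xi> (fst p @ [snd p])))^2) summable_on Sigma UNIV (\<lambda>_. UNIV)"
    by (simp add: o_def snoc_map_def)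
  have r: "\<And>x. (\<lambda>y. (cmod (\<xi> (x@[y])))^2) summable_on UNIV"
    using l2_row(1)[OF assms(2)] unfolding l2_space_def by blast
  have "(\<lambda>x. infsum (\<lambda>y. (cmod (\<xi> (fst (x,y) @ [snd (x,y)])))^2) UNIV) summable_on UNIV"
    by (rule summable_on_SigmaD[OF s3]) (simp add: r)
  hence rows: "(\<lambda>ys. \<Sum>\<^sub>\<infinity>i. (cmod (\<xi> (ys@[i])))^2) summable_on UNIV" by simp
  have "(\<lambda>ys. (\<Sum>\<^sub>\<infinity>i. (cmod (\<xi> (ys@[i])))^2) * (\<Sum>\<^sub>\<infinity>i. (cmod (v i))^2)) summable_on UNIV"
    using rows by (rule summable_on_cmult_left)
  then show ?thesis unfolding l2_space_def mem_Collect_eq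
    by (rule summable_on_comparison_test) (use adjT_bound[OF assms] in auto)
qed

lemma prod_le_sq: fixes a b :: real assumes "0 \<le> a" "0 \<le> b" shows "a*b \<le> a^2 + b^2"
proof -
  have "0 \<le> (a - b)^2" by simp
  hence "0 \<le> a^2 + b^2 - 2*(a*b)" by (simp add: power2_diff mult.assoc)
  moreover have "0 \<le> a*b" using assms by simp
  ultimately show ?thesis by linarith
qed

lemma snoc_sq_summable:
  assumes "\<xi> \<in> l2_space"
  shows "(\<lambda>p. (cmod (\<xi> (fst p @ [snd p])))^2) summable_on UNIV"
proof -
  have "(\<lambda>xs. (cmod (\<xi> xs))^2) summable_on UNIV" using assms by (simp add: l2_space_def)
  hence "(\<lambda>xs. (cmod (\<xi> xs))^2) summable_on range snoc_map"
    by (rule summable_on_subset_banach) simp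
  hence "((\<lambda>xs. (cmod (\<xi> xs))^2) \<circ> snoc_map) summable_on UNIV"
    using summable_on_reindex[OF snoc_map_inj] by blast
  then show ?thesis by (simp add: o_def snoc_map_def)
qed

lemma inner_delta: "l2_inner (\<lambda>xs. if xs = y then 1 else 0) \<zeta> = cnj (\<zeta> y)"
proof -
  have "l2_inner (\<lambda>xs. if xs = y then 1 else 0) \<zeta> = infsum (\<lambda>xs. (if xs = y then 1 else 0) * cnj (\<zeta> xs)) {y}"
    unfolding l2_inner_def by (rule infsum_cong_neutral) auto
  then show ?thesis by simp
qed

lemma delta_l2: "(\<lambda>xs. if xs = y then 1 else (0::complex)) \<in> l2_space"
proof -
  have "{xs. (if xs = y then 1 else (0::complex)) \<noteq> 0} = {y}" by auto
  then show ?thesis by (intro l2_finite_support) simp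
qed

lemma adj_identity:
  assumes v: "v \<in> l2_space" and eta: "\<eta> \<in> l2_space" and xi: "\<xi> \<in> l2_space"
  shows "l2_inner (creation v \<eta>) \<xi> = l2_inner \<eta> (adjT v \<xi>)"
proof -
  define H where "H p = \<eta> (fst p) * v (snd p) * cnj (\<xi> (fst p @ [snd p]))" for p
  have 1: "l2_inner (creation v \<eta>) \<xi> = infsum H UNIV"
  proof -
    have "l2_inner (creation v \<eta>) \<xi> = infsum ((\<lambda>xs. creation v \<eta> xs * cnj (\<xi> xs)) \<circ> snoc_map) UNIV"
      unfolding l2_inner_def
      using lift_summable(2)[of "\<lambda>xs. creation v \<eta> xs * cnj (\<xi> xs)"] by (simp add: creation_def)
    also have "(\<lambda>xs. creation v \<eta> xs * cnj (\<xi> xs)) \<circ> snoc_map = H"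
      by (rule ext) (simp add: H_def creation_def snoc_map_def)
    finally show ?thesis .
  qed
  have K: "(\<lambda>p. (cmod (\<eta> (fst p)))^2 * (cmod (v (snd p)))^2 + (cmod (\<xi> (fst p @ [snd p])))^2) summable_on UNIV"
    by (rule summable_on_add[OF prodsq_summable[OF eta v] snoc_sq_summable[OF xi]])
  have "(\<lambda>p. norm (H p)) summable_on UNIV"
  proof (rule summable_on_comparison_test[OF K])
    fix p :: "'a list \<times> 'a"
    have "norm (H p) = (cmod (\<eta> (fst p)) * cmod (v (snd p))) * cmod (\<xi> (fst p @ [snd p]))"
      by (simp add: H_def norm_mult)
    also have "\<dots> \<le> (cmod (\<eta> (fst p)) * cmod (v (snd p)))^2 + (cmod (\<xi> (fst p @ [snd p])))^2"
      by (rule prod_le_sq) auto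
    finally show "norm (H p) \<le> (cmod (\<eta> (fst p)))^2 * (cmod (v (snd p)))^2 + (cmod (\<xi> (fst p @ [snd p])))^2"
      by (simp add: power_mult_distrib)
  qed simp
  hence Hs: "H summable_on Sigma UNIV (\<lambda>_. UNIV)" using abs_summable_summable by simp
  have 2: "infsum H UNIV = (\<Sum>\<^sub>\<infinity>ys. \<Sum>\<^sub>\<infinity>i. H (ys, i))"
    using infsum_Sigma_banach[OF Hs] by simp
  have 3: "(\<Sum>\<^sub>\<infinity>i. H (ys, i)) = \<eta> ys * cnj (adjT v \<xi> ys)" for ys
  proof -
    have rs: "(\<lambda>i. v i * cnj (\<xi> (ys@[i]))) summable_on UNIV"
      by (rule l2_inner_summable[OF v l2_row(1)[OF xi]])
    have "(\<Sum>\<^sub>\<infinity>i. H (ys, i)) = (\<Sum>\<^sub>\<infinity>i. \<eta> ys * (v i * cnj (\<xi> (ys@[i]))))"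
      by (simp add: H_def mult.assoc)
    also have "\<dots> = \<eta> ys * (\<Sum>\<^sub>\<infinity>i. v i * cnj (\<xi> (ys@[i])))"
      by (rule infsum_cmult_right) (use rs in simp)
    also have "(\<Sum>\<^sub>\<infinity>i. v i * cnj (\<xi> (ys@[i]))) = cnj (adjT v \<xi> ys)"
      unfolding adjT_def l2_inner_def infsum_cnj[symmetric] by (simp add: mult.commute)
    finally show ?thesis .
  qed
  have "l2_inner (creation v \<eta>) \<xi> = (\<Sum>\<^sub>\<infinity>ys. \<eta> ys * cnj (adjT v \<xi> ys))"
    unfolding 1 2 3 ..
  then show ?thesis by (simp add: l2_inner_def)
qed

lemma adjoint_eq:
  assumes v: "v \<in> l2_space" and xi: "\<xi> \<in> l2_space"
  shows "l2_adjoint (creation v) \<xi> = adjT v \<xi>"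
  unfolding l2_adjoint_def
proof (rule the_equality)
  show "adjT v \<xi> \<in> l2_space \<and> (\<forall>\<eta>\<in>l2_space. l2_inner (creation v \<eta>) \<xi> = l2_inner \<eta> (adjT v \<xi>))"
    using adjT_l2[OF v xi] adj_identity[OF v _ xi] by blast
next
  fix \<zeta> assume z: "\<zeta> \<in> l2_space \<and> (\<forall>\<eta>\<in>l2_space. l2_inner (creation v \<eta>) \<xi> = l2_inner \<eta> \<zeta>)"
  show "\<zeta> = adjT v \<xi>"
  proof (rule ext)
    fix y
    have "cnj (\<zeta> y) = l2_inner (\<lambda>xs. if xs = y then 1 else 0) \<zeta>" by (simp add: inner_delta)
    also have "\<dots> = l2_inner (creation v (\<lambda>xs. if xs = y then 1 else 0)) \<xi>"
      using z delta_l2 by metis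
    also have "\<dots> = l2_inner (\<lambda>xs. if xs = y then 1 else 0) (adjT v \<xi>)"
      by (rule adj_identity[OF v delta_l2 xi])
    also have "\<dots> = cnj (adjT v \<xi> y)" by (simp add: inner_delta)
    finally show "\<zeta> y = adjT v \<xi> y" by simp
  qed
qed

lemma cspan_add:
  assumes "f \<in> cspan S" "g \<in> cspan S"
  shows "(\<lambda>x. f x + g x) \<in> cspan S"
proof -
  obtain A c where A: "finite A" "A \<subseteq> S" "f = (\<lambda>x. \<Sum>s\<in>A. c s * s x)"
    using assms(1) unfolding cspan_def by blast
  obtain B d where B: "finite B" "B \<subseteq> S" "g = (\<lambda>x. \<Sum>s\<in>B. d s * s x)"
    using assms(2) unfolding cspan_def by blast
  define e where "e s = (if s \<in> A then c s else 0) + (if s \<in> B then d s else 0)" for s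
  have "(\<lambda>x. f x + g x) = (\<lambda>x. \<Sum>s\<in>A \<union> B. e s * s x)"
  proof (rule ext)
    fix x
    have "(\<Sum>s\<in>A \<union> B. e s * s x) = (\<Sum>s\<in>A \<union> B. (if s \<in> A then c s * s x else 0)) + (\<Sum>s\<in>A \<union> B. (if s \<in> B then d s * s x else 0))"
    proof -
      have "e s * s x = (if s \<in> A then c s * s x else 0) + (if s \<in> B then d s * s x else 0)" for s
        by (simp add: e_def distrib_right)
      then show ?thesis by (simp add: sum.distrib)
    qed
    also have "\<dots> = (\<Sum>s\<in>A. c s * s x) + (\<Sum>s\<in>B. d s * s x)"
    proof -
      have fin: "finite (A \<union> B)" using A(1) B(1) by simp
      have "(\<Sum>s\<in>A \<union> B. (if s \<in> A then c s * s x else 0)) = (\<Sum>s\<in>(A \<union> B) \<inter> A. c s * s x)"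
        by (rule sum.inter_restrict[OF fin, symmetric])
      moreover have "(\<Sum>s\<in>A \<union> B. (if s \<in> B then d s * s x else 0)) = (\<Sum>s\<in>(A \<union> B) \<inter> B. d s * s x)"
        by (rule sum.inter_restrict[OF fin, symmetric])
      moreover have "(A \<union> B) \<inter> A = A" "(A \<union> B) \<inter> B = B" by auto
      ultimately show ?thesis by simp
    qed
    finally show "f x + g x = (\<Sum>s\<in>A \<union> B. e s * s x)" using A(3) B(3) by simp
  qed
  then show ?thesis unfolding cspan_def using A B by blast
qed

lemma cspan_base:
  assumes "s \<in> S" shows "(\<lambda>x. c * s x) \<in> cspan S"
  unfolding cspan_def using assms by (intro CollectI exI[of _ "{s}"] exI[of _ "\<lambda>_. c"]) simp

lemma adjT_add:
  assumes "v \<in> l2_space" "f \<in> l2_space" "g \<in> l2_space"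
  shows "adjT v (\<lambda>x. f x + g x) ys = adjT v f ys + adjT v g ys"
  unfolding adjT_def l2_inner_def
  using l2_inner_summable[OF l2_row(1)[OF assms(2)] assms(1)] l2_inner_summable[OF l2_row(1)[OF assms(3)] assms(1)]
  by (simp add: distrib_right infsum_add)

lemma adjT_scale:
  assumes "v \<in> l2_space" "f \<in> l2_space"
  shows "adjT v (\<lambda>x. c * f x) ys = c * adjT v f ys"
  unfolding adjT_def l2_inner_def
  using l2_inner_summable[OF l2_row(1)[OF assms(2)] assms(1)]
  by (simp add: mult.assoc infsum_cmult_right)

lemma adjT_zero: "adjT v (\<lambda>x. 0) ys = 0"
  by (simp add: adjT_def l2_inner_def)

definition Kset :: "('i \<Rightarrow> complex) \<Rightarrow> ('i list \<Rightarrow> complex) set" where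
  "Kset v = {\<xi> \<in> l2_space. adjT v \<xi> = (\<lambda>_. 0)}"

lemma Kset_add: "v \<in> l2_space \<Longrightarrow> f \<in> Kset v \<Longrightarrow> g \<in> Kset v \<Longrightarrow> (\<lambda>x. f x + g x) \<in> Kset v"
  unfolding Kset_def using adjT_add l2_add by fastforce

lemma Kset_scale: "v \<in> l2_space \<Longrightarrow> f \<in> Kset v \<Longrightarrow> (\<lambda>x. c * f x) \<in> Kset v"
  unfolding Kset_def using adjT_scale l2_scale by fastforce

lemma Kset_zero: "(\<lambda>x. 0) \<in> Kset v"
  unfolding Kset_def using adjT_zero l2_zero by fastforce

lemma cspan_Kset:
  assumes v: "v \<in> l2_space" and S: "S \<subseteq> Kset v"
  shows "cspan S \<subseteq> Kset v"
proof
  fix f assume "f \<in> cspan S"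
  then obtain A c where A: "finite A" "A \<subseteq> S" "f = (\<lambda>x. \<Sum>s\<in>A. c s * s x)"
    unfolding cspan_def by blast
  have "(\<lambda>x. \<Sum>s\<in>A. c s * s x) \<in> Kset v" using A(1,2)
  proof (induction A rule: finite_induct)
    case empty then show ?case using Kset_zero by simp
  next
    case (insert a A)
    have "(\<lambda>x. c a * a x + (\<Sum>s\<in>A. c s * s x)) \<in> Kset v"
      using insert S by (intro Kset_add[OF v] Kset_scale[OF v]) auto
    then show ?case using insert by simp
  qed
  then show "f \<in> Kset v" using A(3) by simp
qed

lemma vac_Kset: "(fock_vac :: 'i list \<Rightarrow> complex) \<in> Kset v"
proof -
  have "{x. (fock_vac :: 'i list \<Rightarrow> complex) x \<noteq> 0} = {[]}" by (auto simp: fock_vac_def)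
  hence "finite {x. (fock_vac :: 'i list \<Rightarrow> complex) x \<noteq> 0}" by simp
  hence "(fock_vac :: 'i list \<Rightarrow> complex) \<in> l2_space" by (rule l2_finite_support)
  moreover have "adjT v fock_vac = (\<lambda>_. 0)" by (rule ext) (simp add: adjT_def l2_inner_def fock_vac_def)
  ultimately show ?thesis by (simp add: Kset_def)
qed

lemma creation_Kset:
  assumes v: "v \<in> l2_space" and w: "w \<in> l2_space" "l2_inner w v = 0" and eta: "\<eta> \<in> l2_space"
  shows "creation w \<eta> \<in> Kset v"
proof -
  have "adjT v (creation w \<eta>) ys = 0" for ys
  proof -
    have "adjT v (creation w \<eta>) ys = (\<Sum>\<^sub>\<infinity>i. \<eta> ys * (w i * cnj (v i)))"
      by (simp add: adjT_def l2_inner_def creation_def mult.assoc)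
    also have "\<dots> = \<eta> ys * l2_inner w v" unfolding l2_inner_def
      by (rule infsum_cmult_right) (use l2_inner_summable[OF w(1) v] in simp)
    finally show ?thesis using w(2) by simp
  qed
  then show ?thesis using creation_l2[OF w(1) eta] by (auto simp: Kset_def)
qed

lemma tail_small:
  fixes Q :: "'a \<Rightarrow> real"
  assumes Qs: "Q summable_on UNIV" and e: "e > 0"
  shows "\<exists>G. finite G \<and> infsum Q (- G) < e"
proof -
  have "((\<lambda>F. sum Q F) \<longlongrightarrow> infsum Q UNIV) (finite_subsets_at_top UNIV)"
    by (rule infsum_tendsto[OF Qs])
  hence "eventually (\<lambda>F. dist (sum Q F) (infsum Q UNIV) < e) (finite_subsets_at_top UNIV)"
    using e by (rule tendstoD)
  then obtain X where X: "finite X" "dist (sum Q X) (infsum Q UNIV) < e"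
    unfolding eventually_finite_subsets_at_top by blast
  have s1: "Q summable_on X" using X(1) by simp
  have s2: "Q summable_on (- X)" by (rule summable_on_subset_banach[OF Qs]) simp
  have "infsum Q (X \<union> - X) = infsum Q X + infsum Q (- X)"
    by (rule infsum_Un_disjoint[OF s1 s2]) auto
  hence "infsum Q UNIV = sum Q X + infsum Q (- X)" using X(1) by simp
  then have "infsum Q (- X) < e" using X(2) by (simp add: dist_real_def)
  then show ?thesis using X(1) by blast
qed

lemma adjT_small:
  assumes v: "v \<in> l2_space" and nv: "(\<Sum>\<^sub>\<infinity>i. (cmod (v i))^2) = 1" and h: "h \<in> l2_space"
  shows "cmod (adjT v h ys) \<le> l2_norm h"
proof -
  have "(cmod (adjT v h ys))^2 \<le> (\<Sum>\<^sub>\<infinity>i. (cmod (h (ys@[i])))^2) * (\<Sum>\<^sub>\<infinity>i. (cmod (v i))^2)"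
    by (rule adjT_bound[OF v h])
  also have "\<dots> = (\<Sum>\<^sub>\<infinity>i. (cmod (h (ys@[i])))^2)" using nv by simp
  also have "\<dots> \<le> (\<Sum>\<^sub>\<infinity>x. (cmod (h x))^2)" by (rule l2_row(2)[OF h])
  finally show ?thesis unfolding l2_norm_def by (rule real_le_rsqrt)
qed

lemma adjT_diff:
  assumes "v \<in> l2_space" "f \<in> l2_space" "g \<in> l2_space"
  shows "adjT v (\<lambda>x. f x - g x) ys = adjT v f ys - adjT v g ys"
proof -
  have "(\<lambda>x. f x - g x) = (\<lambda>x. f x + (-1) * g x)" by simp
  moreover have "adjT v (\<lambda>x. f x + (-1) * g x) ys = adjT v f ys + adjT v (\<lambda>x. (-1) * g x) ys"
    by (rule adjT_add[OF assms(1,2) l2_scale[OF assms(3)]])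
  moreover have "adjT v (\<lambda>x. (-1) * g x) ys = (-1) * adjT v g ys" by (rule adjT_scale[OF assms(1,3)])
  ultimately show ?thesis by simp
qed

lemma closure_Kset:
  assumes v: "v \<in> l2_space" and nv: "(\<Sum>\<^sub>\<infinity>i. (cmod (v i))^2) = 1" and S: "S \<subseteq> Kset v"
  shows "l2_closure (cspan S) \<subseteq> Kset v"
proof
  fix f assume f: "f \<in> l2_closure (cspan S)"
  hence fl: "f \<in> l2_space" by (simp add: l2_closure_def)
  have "adjT v f ys = 0" for ys
  proof (rule ccontr)
    assume ne: "adjT v f ys \<noteq> 0"
    hence "cmod (adjT v f ys) > 0" by simp
    then obtain g where g: "g \<in> cspan S" "l2_norm (\<lambda>x. f x - g x) < cmod (adjT v f ys)"
      using f unfolding l2_closure_def by blast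
    have gK: "g \<in> Kset v" using cspan_Kset[OF v S] g(1) by blast
    hence gl: "g \<in> l2_space" and g0: "adjT v g ys = 0" by (auto simp: Kset_def)
    have "adjT v (\<lambda>x. f x - g x) ys = adjT v f ys" using adjT_diff[OF v fl gl] g0 by simp
    moreover have "cmod (adjT v (\<lambda>x. f x - g x) ys) \<le> l2_norm (\<lambda>x. f x - g x)"
      by (rule adjT_small[OF v nv l2_diff[OF fl gl]])
    ultimately show False using g(2) by simp
  qed
  then show "f \<in> Kset v" using fl by (auto simp: Kset_def)
qed

lemma trunc_cspan:
  fixes \<xi> :: "'i list \<Rightarrow> complex"
  assumes v: "v \<in> l2_space" and xi: "\<xi> \<in> Kset v" and F: "finite F"
  shows "(\<lambda>xs. if xs = [] \<or> butlast xs \<in> F then \<xi> xs else 0)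
         \<in> cspan ({fock_vac} \<union> (\<Union>w\<in>{w \<in> l2_space. l2_inner w v = 0}. creation w ` l2_space))"
  using F
proof (induction F rule: finite_induct)
  case empty
  have "(\<lambda>x. \<xi> [] * fock_vac x) \<in> cspan ({fock_vac} \<union> (\<Union>w\<in>{w \<in> l2_space. l2_inner w v = 0}. creation w ` l2_space))"
    by (rule cspan_base) simp
  moreover have "(\<lambda>x. \<xi> [] * fock_vac x) = (\<lambda>xs. if xs = [] \<or> butlast xs \<in> {} then \<xi> xs else 0)"
    by (rule ext) (simp add: fock_vac_def)
  ultimately show ?case by simp
next
  case (insert y F)
  define w where "w = (\<lambda>i. \<xi> (y@[i]))"
  define d where "d = (\<lambda>xs. if xs = y then 1 else (0::complex))"
  have xl: "\<xi> \<in> l2_space" and x0: "adjT v \<xi> = (\<lambda>_. 0)" using xi by (auto simp: Kset_def)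
  have wl: "w \<in> l2_space" unfolding w_def by (rule l2_row(1)[OF xl])
  have wv: "l2_inner w v = 0" using fun_cong[OF x0, of y] by (simp add: adjT_def w_def)
  have dl: "d \<in> l2_space" unfolding d_def by (rule delta_l2)
  have "creation w d \<in> ({fock_vac} \<union> (\<Union>w\<in>{w \<in> l2_space. l2_inner w v = 0}. creation w ` l2_space))"
    using wl wv dl by blast
  hence "(\<lambda>x. 1 * creation w d x) \<in> cspan ({fock_vac} \<union> (\<Union>w\<in>{w \<in> l2_space. l2_inner w v = 0}. creation w ` l2_space))"
    by (rule cspan_base)
  hence "(\<lambda>x. (if x = [] \<or> butlast x \<in> F then \<xi> x else 0) + 1 * creation w d x) \<in> cspan ({fock_vac} \<union> (\<Union>w\<in>{w \<in> l2_space. l2_inner w v = 0}. creation w ` l2_space))"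
    by (rule cspan_add[OF insert.IH])
  moreover have "(\<lambda>x. (if x = [] \<or> butlast x \<in> F then \<xi> x else 0) + 1 * creation w d x)
      = (\<lambda>xs. if xs = [] \<or> butlast xs \<in> insert y F then \<xi> xs else 0)"
  proof (rule ext)
    fix xs :: "'i list"
    show "(if xs = [] \<or> butlast xs \<in> F then \<xi> xs else 0) + 1 * creation w d xs
      = (if xs = [] \<or> butlast xs \<in> insert y F then \<xi> xs else 0)"
    proof (cases "xs = []")
      case True then show ?thesis by (simp add: creation_def)
    next
      case False
      hence xs: "butlast xs @ [last xs] = xs" by simp
      show ?thesis
      proof (cases "butlast xs = y")
        case True
        then show ?thesis using False insert.hyps(2) xs
          by (simp add: creation_def d_def w_def)
      next
        case nb: False
        then show ?thesis using False by (simp add: creation_def d_def)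
      qed
    qed
  qed
  ultimately show ?case by simp
qed

theorem corollary3p13:
  fixes v :: "'i \<Rightarrow> complex"
  assumes "\<exists>a b :: 'i. a \<noteq> b"
    and "v \<in> l2_space" and "l2_norm v = 1"
  shows "l2_closure (cspan ({fock_vac} \<union>
            (\<Union>w\<in>{w \<in> l2_space. l2_inner w v = 0}. creation w ` l2_space)))
         = {\<xi> \<in> l2_space. l2_adjoint (creation v) \<xi> = (\<lambda>_. 0)}"
proof -
  note v = assms(2)
  have nv: "(\<Sum>\<^sub>\<infinity>i. (cmod (v i))^2) = 1" using assms(3) by (simp add: l2_norm_def)
  define S where "S = ({fock_vac} \<union> (\<Union>w\<in>{w \<in> l2_space. l2_inner w v = 0}. creation w ` l2_space))"
  have R: "{\<xi> \<in> l2_space. l2_adjoint (creation v) \<xi> = (\<lambda>_. 0)} = Kset v"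
    using adjoint_eq[OF v] by (auto simp: Kset_def)
  have SK: "S \<subseteq> Kset v"
    unfolding S_def using vac_Kset creation_Kset[OF v] by blast
  have sub1: "l2_closure (cspan S) \<subseteq> Kset v" by (rule closure_Kset[OF v nv SK])
  have sub2: "Kset v \<subseteq> l2_closure (cspan S)"
  proof
    fix \<xi> assume xi: "\<xi> \<in> Kset v"
    hence xl: "\<xi> \<in> l2_space" by (simp add: Kset_def)
    define Q where "Q = (\<lambda>xs. (cmod (\<xi> xs))^2)"
    have Qs: "Q summable_on UNIV" using xl by (simp add: Q_def l2_space_def)
    have "\<exists>g\<in>cspan S. l2_norm (\<lambda>x. \<xi> x - g x) < e" if e: "e > 0" for e
    proof -
      obtain G where G: "finite G" "infsum Q (- G) < e^2"
        using tail_small[OF Qs, of "e^2"] e by auto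
      define F where "F = butlast ` G"
      have F: "finite F" using G(1) by (simp add: F_def)
      define g where "g = (\<lambda>xs. if xs = [] \<or> butlast xs \<in> F then \<xi> xs else 0)"
      have gS: "g \<in> cspan S" unfolding g_def S_def by (rule trunc_cspan[OF v xi F])
      define T where "T = {xs. xs \<noteq> [] \<and> butlast xs \<notin> F}"
      have "(\<Sum>\<^sub>\<infinity>x. (cmod (\<xi> x - g x))^2) = infsum Q T"
        by (rule infsum_cong_neutral) (auto simp: T_def g_def Q_def)
      also have "\<dots> \<le> infsum Q (- G)"
      proof (rule infsum_mono_neutral)
        show "Q summable_on T" by (rule summable_on_subset_banach[OF Qs]) simp
        show "Q summable_on (- G)" by (rule summable_on_subset_banach[OF Qs]) simp
      next
        fix x assume "x \<in> T - (- G)"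
        hence "x \<in> G" "x \<noteq> []" "butlast x \<notin> F" by (auto simp: T_def)
        hence False by (auto simp: F_def)
        then show "Q x \<le> 0" ..
      qed (auto simp: Q_def)
      also have "\<dots> < e^2" by (rule G(2))
      finally have "(\<Sum>\<^sub>\<infinity>x. (cmod (\<xi> x - g x))^2) < e^2" .
      hence "l2_norm (\<lambda>x. \<xi> x - g x) < sqrt (e^2)" unfolding l2_norm_def
        by (rule real_sqrt_less_mono)
      hence "l2_norm (\<lambda>x. \<xi> x - g x) < e" using e by simp
      then show ?thesis using gS by blast
    qed
    then show "\<xi> \<in> l2_closure (cspan S)" using xl by (simp add: l2_closure_def)
  qed
  show ?thesis unfolding R S_def[symmetric] using sub1 sub2 by blast
qed

end
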